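(* Let $\mathfrak g$ be of type $A_n$. For every $b\in\mathcal B(\infty)$ and $i\in I$, $\widetilde e_i^\ast(b)\in\mathcal B(\infty)\cup\{\mathbf 0\}$ and $\widetilde f_i^\ast(b)\in\mathcal B(\infty)$.
   Context: $I=\{1,\dots,n\}$. $\mathcal I=\{(s,t)\in\mathbb Z_{>0}\times I:s+t\le n+1\}$; $\mathcal B(\infty)$ is the set of $b=(b_{s,t})_{(s,t)\in\mathcal I}\in\mathbb Z_{\ge0}^{\mathcal I}$ with $b_{1,k}\ge b_{2,k-1}\ge\dots\ge b_{k,1}$ for $1\le k\le n$. Convention: $b_{s,t}=0$, $\mathbf e_{s,t}=0$ for $(s,t)\notin\mathcal I$. $\partial^\ast_{s,t}(b)=b_{s-1,t}-b_{s-1,t+1}-b_{s,t-1}+b_{s,t}$. For $1\le k\le i$: $\Sigma^\ast_k(b)=\sum_{t=1}^k\partial^\ast_{t,i+1-t}(b)$; $\varepsilon_i^\ast(b)=\max_k\Sigma_k^\ast(b)$; $m_i^\ast(b)$, $M_i^\ast(b)$ the smallest and largest maximizing $k$. $\widetilde f_i^\ast(b)=b+\sum_{t=1}^{m_i^\ast(b)}(\mathbf e_{t,i+1-t}-\mathbf e_{t-1,i+1-t})$; $\widetilde e_i^\ast(b)=b-\sum_{t=1}^{M_i^\ast(b)}(\mathbf e_{t,i+1-t}-\mathbf e_{t-1,i+1-t})$ if $\varepsilon_i^\ast(b)>0$, else $\widetilde e_i^\ast(b)=\mathbf 0$ (formal symbol). *)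

theory Defs
  imports Main
begin

(* Elements of \<int>^\<I> are functions nat \<Rightarrow> nat \<Rightarrow> int vanishing outside \<I>
   (this realises the convention b_{s,t} = 0 for (s,t) \<notin> \<I>). *)
definition idx :: "nat \<Rightarrow> (nat \<times> nat) set" where
  "idx n = {(s,t). 0 < s \<and> 1 \<le> t \<and> t \<le> n \<and> s + t \<le> n + 1}"

definition Binf :: "nat \<Rightarrow> (nat \<Rightarrow> nat \<Rightarrow> int) set" where
  "Binf n = {b. (\<forall>s t. (s,t) \<notin> idx n \<longrightarrow> b s t = 0)
              \<and> (\<forall>s t. (s,t) \<in> idx n \<longrightarrow> 0 \<le> b s t)
              \<and> (\<forall>k j. 1 \<le> k \<and> k \<le> n \<and> 1 \<le> j \<and> j < k \<longrightarrow>
                       b (j+1) (k-j) \<le> b j (k+1-j))}"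

definition evec :: "nat \<Rightarrow> nat \<Rightarrow> nat \<Rightarrow> (nat \<Rightarrow> nat \<Rightarrow> int)" where
  "evec n s t = (\<lambda>u v. if (s,t) \<in> idx n \<and> u = s \<and> v = t then 1 else 0)"

definition dstar :: "(nat \<Rightarrow> nat \<Rightarrow> int) \<Rightarrow> nat \<Rightarrow> nat \<Rightarrow> int" where
  "dstar b s t = b (s-1) t - b (s-1) (t+1) - b s (t-1) + b s t"

definition Sigstar :: "nat \<Rightarrow> (nat \<Rightarrow> nat \<Rightarrow> int) \<Rightarrow> nat \<Rightarrow> int" where
  "Sigstar i b k = (\<Sum>t=1..k. dstar b t (i+1-t))"

definition epsstar :: "nat \<Rightarrow> (nat \<Rightarrow> nat \<Rightarrow> int) \<Rightarrow> int" where
  "epsstar i b = Max (Sigstar i b ` {1..i})"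

definition mstar :: "nat \<Rightarrow> (nat \<Rightarrow> nat \<Rightarrow> int) \<Rightarrow> nat" where
  "mstar i b = Min {k \<in> {1..i}. Sigstar i b k = epsstar i b}"

definition Mstar :: "nat \<Rightarrow> (nat \<Rightarrow> nat \<Rightarrow> int) \<Rightarrow> nat" where
  "Mstar i b = Max {k \<in> {1..i}. Sigstar i b k = epsstar i b}"

definition shiftvec :: "nat \<Rightarrow> nat \<Rightarrow> nat \<Rightarrow> (nat \<Rightarrow> nat \<Rightarrow> int)" where
  "shiftvec n i m = (\<lambda>u v. \<Sum>t=1..m. evec n t (i+1-t) u v - evec n (t-1) (i+1-t) u v)"

definition fstar :: "nat \<Rightarrow> nat \<Rightarrow> (nat \<Rightarrow> nat \<Rightarrow> int) \<Rightarrow> (nat \<Rightarrow> nat \<Rightarrow> int)" where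
  "fstar n i b = (\<lambda>u v. b u v + shiftvec n i (mstar i b) u v)"

(* None represents the formal symbol \<zero> *)
definition estar :: "nat \<Rightarrow> nat \<Rightarrow> (nat \<Rightarrow> nat \<Rightarrow> int) \<Rightarrow> (nat \<Rightarrow> nat \<Rightarrow> int) option" where
  "estar n i b = (if 0 < epsstar i b then Some (\<lambda>u v. b u v - shiftvec n i (Mstar i b) u v)
                  else None)"

end

theory Submission
  imports Defs
begin

lemma binf_zero: "b \<in> Binf n \<Longrightarrow> (s,t) \<notin> idx n \<Longrightarrow> b s t = 0"
  by (simp add: Binf_def)

lemma binf_ge0: "b \<in> Binf n \<Longrightarrow> 0 \<le> b s t"
  unfolding Binf_def by (cases "(s,t) \<in> idx n") auto

lemma binf_step: "b \<in> Binf n \<Longrightarrow> 1 \<le> j \<Longrightarrow> j < k \<Longrightarrow> k \<le> n \<Longrightarrow> b (j+1) (k-j) \<le> b j (k+1-j)"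
  unfolding Binf_def by auto

lemma binf_mono:
  assumes "b \<in> Binf n" "1 \<le> s1" "s1 \<le> s2" "s2 \<le> d" "d \<le> n"
  shows "b s2 (d+1-s2) \<le> b s1 (d+1-s1)"
  using assms(3,4)
proof (induction s2 rule: dec_induct)
  case base
  then show ?case by simp
next
  case (step s)
  have "b (s+1) (d-s) \<le> b s (d+1-s)"
    using binf_step[OF assms(1), of s d] step assms by auto
  moreover have "d + 1 - Suc s = d - s" by simp
  ultimately show ?case using step by simp
qed

lemma sig_closed:
  assumes "b \<in> Binf n" "k \<le> i"
  shows "Sigstar i b k = b k (i+1-k) - b k (i-k)"
  using assms(2)
proof (induction k)
  case 0
  have "b 0 t = 0" for t using binf_zero[OF assms(1)] by (simp add: idx_def)
  then show ?case by (simp add: Sigstar_def)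
next
  case (Suc k)
  have "Sigstar i b (Suc k) = Sigstar i b k + dstar b (Suc k) (i + 1 - Suc k)"
    by (simp add: Sigstar_def)
  also have "\<dots> = b k (i+1-k) - b k (i-k) + dstar b (Suc k) (i - k)"
    using Suc by simp
  also have "dstar b (Suc k) (i - k) = b k (i-k) - b k (i+1-k) - b (Suc k) (i - Suc k) + b (Suc k) (i-k)"
    using Suc by (simp add: dstar_def Suc_diff_le)
  finally show ?case by simp
qed

lemma evec1: "evec n t (i+1-t) u v = (if t = u then (if v = i+1-u \<and> (u,v) \<in> idx n then 1 else 0) else 0)"
  by (auto simp: evec_def)

lemma evec2: "evec n (t-1) (i+1-t) u v = (if t = Suc u then (if 0 < u \<and> v = i-u \<and> (u,v) \<in> idx n then 1 else 0) else 0)"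
  by (auto simp: evec_def idx_def)

lemma shift_closed:
  assumes "m \<le> i" "i \<le> n"
  shows "shiftvec n i m u v = (if 1 \<le> u \<and> u \<le> m \<and> v = i+1-u then 1 else 0)
       - (if 1 \<le> u \<and> u+1 \<le> m \<and> v = i-u then 1 else 0)"
proof -
  have "shiftvec n i m u v = (\<Sum>t=1..m. evec n t (i+1-t) u v) - (\<Sum>t=1..m. evec n (t-1) (i+1-t) u v)"
    by (simp add: shiftvec_def sum_subtractf)
  also have "(\<Sum>t=1..m. evec n t (i+1-t) u v) = (if 1 \<le> u \<and> u \<le> m \<and> v = i+1-u then 1 else 0)"
    unfolding evec1 using assms by (auto simp: idx_def)
  also have "(\<Sum>t=1..m. evec n (t-1) (i+1-t) u v) = (if 1 \<le> u \<and> u+1 \<le> m \<and> v = i-u then 1 else 0)"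
    unfolding evec2 using assms by (auto simp: idx_def)
  finally show ?thesis .
qed



lemma f_ok:
  assumes b: "b \<in> Binf n" and i: "1 \<le> i" "i \<le> n" and m: "1 \<le> m" "m \<le> i"
    and strict: "2 \<le> m \<Longrightarrow> b m (i-m) < b (m-1) (i+1-m)"
  shows "(\<lambda>u v. b u v + shiftvec n i m u v) \<in> Binf n"
proof -
  note sc = shift_closed[OF m(2) i(2)]
  have P1: "\<forall>s t. (s,t) \<notin> idx n \<longrightarrow> b s t + shiftvec n i m s t = 0"
    using binf_zero[OF b] i m by (auto simp: sc idx_def)
  have P2: "0 \<le> b s t + shiftvec n i m s t" for s t
  proof (cases "1 \<le> s \<and> s+1 \<le> m \<and> t = i-s")
    case True
    have "b (m-1) (i-1+1-(m-1)) \<le> b s (i-1+1-s)"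
      by (rule binf_mono[OF b]) (use True i m in auto)
    moreover have "i-1+1-(m-1) = i+1-m" "i-1+1-s = i-s" using True m by auto
    moreover have "0 \<le> b m (i-m)" by (rule binf_ge0[OF b])
    moreover have "shiftvec n i m s t \<ge> -1" unfolding sc by auto
    ultimately show ?thesis using strict True by force
  next
    case False
    then have "shiftvec n i m s t \<ge> 0" unfolding sc by auto
    then show ?thesis using binf_ge0[OF b, of s t] by simp
  qed
  have P3: "b (j+1) (k-j) + shiftvec n i m (j+1) (k-j) \<le> b j (k+1-j) + shiftvec n i m j (k+1-j)"
    if jk: "1 \<le> k" "k \<le> n" "1 \<le> j" "j < k" for j k
  proof -
    have c: "b (j+1) (k-j) \<le> b j (k+1-j)" by (rule binf_step[OF b]) (use jk in auto)
    show ?thesis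
    proof (cases "k = i-1 \<and> j+1 = m")
      case True
      then have e: "k - j = i - m" "k+1-j = i+1-m" "2 \<le> m" "j = m - 1" using jk m by auto
      have "shiftvec n i m (j+1) (k-j) = 0" unfolding sc using e m by auto
      moreover have "shiftvec n i m j (k+1-j) = -1" unfolding sc using e m by auto
      ultimately show ?thesis using strict e by simp
    next
      case False
      have "shiftvec n i m (j+1) (k-j) \<le> shiftvec n i m j (k+1-j)"
        unfolding sc using False jk m i by auto
      then show ?thesis using c by simp
    qed
  qed
  show ?thesis unfolding Binf_def using P1 P2 P3 by auto
qed

lemma e_ok:
  assumes b: "b \<in> Binf n" and i: "1 \<le> i" "i \<le> n" and m: "1 \<le> m" "m \<le> i"
    and pos: "0 < b m (i+1-m)"
    and strict: "m < i \<Longrightarrow> b (m+1) (i-m) < b m (i+1-m)"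
  shows "(\<lambda>u v. b u v - shiftvec n i m u v) \<in> Binf n"
proof -
  note sc = shift_closed[OF m(2) i(2)]
  have P1: "\<forall>s t. (s,t) \<notin> idx n \<longrightarrow> b s t - shiftvec n i m s t = 0"
    using binf_zero[OF b] i m by (auto simp: sc idx_def)
  have P2: "0 \<le> b s t - shiftvec n i m s t" for s t
  proof (cases "1 \<le> s \<and> s \<le> m \<and> t = i+1-s")
    case True
    have "b m (i+1-m) \<le> b s (i+1-s)"
      by (rule binf_mono[OF b]) (use True i m in auto)
    moreover have "shiftvec n i m s t \<le> 1" unfolding sc by auto
    ultimately show ?thesis using pos True by force
  next
    case False
    then have "shiftvec n i m s t \<le> 0" unfolding sc by auto
    then show ?thesis using binf_ge0[OF b, of s t] by simp
  qed
  have P3: "b (j+1) (k-j) - shiftvec n i m (j+1) (k-j) \<le> b j (k+1-j) - shiftvec n i m j (k+1-j)"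
    if jk: "1 \<le> k" "k \<le> n" "1 \<le> j" "j < k" for j k
  proof -
    have c: "b (j+1) (k-j) \<le> b j (k+1-j)" by (rule binf_step[OF b]) (use jk in auto)
    show ?thesis
    proof (cases "k = i \<and> j = m")
      case True
      then have e: "k - j = i - m" "m < i" "k+1-j = i+1-m" using jk m by auto
      have "shiftvec n i m (j+1) (k-j) = 0" unfolding sc using e True by auto
      moreover have "shiftvec n i m j (k+1-j) = 1" unfolding sc using e True m by auto
      ultimately show ?thesis using strict e True by simp
    next
      case False
      have "shiftvec n i m j (k+1-j) \<le> shiftvec n i m (j+1) (k-j)"
        unfolding sc using False jk m i by auto
      then show ?thesis using c by simp
    qed
  qed
  show ?thesis unfolding Binf_def using P1 P2 P3 by auto
qed


theorem proposition6p4: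
  fixes n i :: nat and b :: "nat \<Rightarrow> nat \<Rightarrow> int"
  assumes "1 \<le> n" and "b \<in> Binf n" and "i \<in> {1..n}"
  shows "(estar n i b = None \<or> (\<exists>b'. estar n i b = Some b' \<and> b' \<in> Binf n))
         \<and> fstar n i b \<in> Binf n"
proof -
  note b = assms(2)
  have i: "1 \<le> i" "i \<le> n" using assms(3) by auto
  define Z where "Z = {k \<in> {1..i}. Sigstar i b k = epsstar i b}"
  have fin: "finite (Sigstar i b ` {1..i})" "Sigstar i b ` {1..i} \<noteq> {}" using i by auto
  have le: "Sigstar i b k \<le> epsstar i b" if "k \<in> {1..i}" for k
    unfolding epsstar_def using fin that by simp
  have "epsstar i b \<in> Sigstar i b ` {1..i}" unfolding epsstar_def using fin by (rule Max_in)
  then have Zne: "Z \<noteq> {}" unfolding Z_def by force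
  have Zfin: "finite Z" unfolding Z_def by simp
  have mZ: "mstar i b \<in> Z" unfolding mstar_def Z_def[symmetric] using Zne Zfin by simp
  have MZ: "Mstar i b \<in> Z" unfolding Mstar_def Z_def[symmetric] using Zne Zfin by simp
  have mmin: "k \<notin> Z" if "k < mstar i b" for k
    using that Min_le[OF Zfin] unfolding mstar_def Z_def[symmetric] by force
  have Mmax: "k \<notin> Z" if "k > Mstar i b" for k
    using that Max_ge[OF Zfin] unfolding Mstar_def Z_def[symmetric] by force
  have F: "fstar n i b \<in> Binf n"
  proof -
    let ?m = "mstar i b"
    have m: "1 \<le> ?m" "?m \<le> i" "Sigstar i b ?m = epsstar i b" using mZ unfolding Z_def by auto
    have strict: "b ?m (i-?m) < b (?m-1) (i+1-?m)" if "2 \<le> ?m"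
    proof -
      have "?m - 1 \<notin> Z" by (rule mmin) (use that in auto)
      moreover have "Sigstar i b (?m-1) \<le> epsstar i b" by (rule le) (use that m in auto)
      ultimately have "Sigstar i b (?m-1) < epsstar i b" using that m by (auto simp: Z_def)
      moreover have "Sigstar i b (?m-1) = b (?m-1) (i+1-(?m-1)) - b (?m-1) (i-(?m-1))"
        by (rule sig_closed[OF b]) (use m in auto)
      moreover have "Sigstar i b ?m = b ?m (i+1-?m) - b ?m (i-?m)"
        by (rule sig_closed[OF b]) (use m in auto)
      moreover have "b (?m-1+1) (i-(?m-1)) \<le> b (?m-1) (i+1-(?m-1))"
        by (rule binf_step[OF b]) (use m i that in auto)
      moreover have "?m-1+1 = ?m" "i-(?m-1) = i+1-?m" using that m by auto
      ultimately show ?thesis using m by simp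
    qed
    show ?thesis unfolding fstar_def by (rule f_ok[OF b i m(1,2) strict])
  qed
  have E: "estar n i b = None \<or> (\<exists>b'. estar n i b = Some b' \<and> b' \<in> Binf n)"
  proof (cases "0 < epsstar i b")
    case False
    then show ?thesis by (simp add: estar_def)
  next
    case True
    let ?m = "Mstar i b"
    have m: "1 \<le> ?m" "?m \<le> i" "Sigstar i b ?m = epsstar i b" using MZ unfolding Z_def by auto
    have sm: "Sigstar i b ?m = b ?m (i+1-?m) - b ?m (i-?m)"
      by (rule sig_closed[OF b]) (use m in auto)
    have pos: "0 < b ?m (i+1-?m)" using True m sm binf_ge0[OF b, of ?m "i-?m"] by simp
    have strict: "b (?m+1) (i-?m) < b ?m (i+1-?m)" if "?m < i"
    proof -
      have "?m + 1 \<notin> Z" by (rule Mmax) simp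
      then have "Sigstar i b (?m+1) < epsstar i b" using le[of "?m+1"] that m by (auto simp: Z_def)
      moreover have "Sigstar i b (?m+1) = b (?m+1) (i+1-(?m+1)) - b (?m+1) (i-(?m+1))"
        by (rule sig_closed[OF b]) (use that in auto)
      moreover have "b (?m+1) (i-(?m+1)) \<le> b ?m (i-?m)"
      proof (cases "?m + 1 < i")
        case True
        have "b (?m+1) ((i-1)-?m) \<le> b ?m ((i-1)+1-?m)"
          by (rule binf_step[OF b]) (use True m i in auto)
        moreover have "(i-1)-?m = i-(?m+1)" "(i-1)+1-?m = i-?m" using True by auto
        ultimately show ?thesis by simp
      next
        case False
        then have "i - (?m+1) = 0" by simp
        then have "b (?m+1) (i-(?m+1)) = 0" using binf_zero[OF b] by (simp add: idx_def)
        then show ?thesis using binf_ge0[OF b] by simp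
      qed
      moreover have "i+1-(?m+1) = i-?m" by simp
      ultimately show ?thesis using m sm by simp
    qed
    have "estar n i b = Some (\<lambda>u v. b u v - shiftvec n i ?m u v)"
      using True by (simp add: estar_def)
    moreover have "(\<lambda>u v. b u v - shiftvec n i ?m u v) \<in> Binf n"
      by (rule e_ok[OF b i m(1,2) pos strict])
    ultimately show ?thesis by blast
  qed
  show ?thesis using E F by blast
qed

end
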